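(* Let $g:\mathbb{R}\to\mathbb{R}$ be locally Lipschitz continuous with $g(0)=0$, $g(x)x>0$ for all $x\neq0$, $g_0:=\liminf_{|x|\to0}g(x)/x>0$, and $g$ bounded on $\mathbb{R}^-$. Let $\mathcal{G}(x)=\int_0^x g(\xi)\,d\xi$. For $\lambda>0$ consider the autonomous system $x'=y$, $y'=-\lambda g(x)$, and for $0<c<\min\{\mathcal{G}(-\infty),\mathcal{G}(+\infty)\}$ let $\tau(c)$ be the period of the closed orbit $\{\tfrac12 y^2+\lambda\mathcal{G}(x)=\lambda c\}$, i.e. $\tau(c)=\tau^+(c)+\tau^-(c)$ with $$\tau^+(c)=\sqrt{\tfrac{2}{\lambda}}\int_0^{x_+}\frac{d\xi}{\sqrt{c-\mathcal{G}(\xi)}},\qquad \tau^-(c)=\sqrt{\tfrac{2}{\lambda}}\int_{x_-}^0\frac{d\xi}{\sqrt{c-\mathcal{G}(\xi)}},$$ where $x_-<0<x_+$ satisfy $\mathcal{G}(x_-)=\mathcal{G}(x_+)=c$. Then, for each $\lambda>0$, the time-map $\tau$ is continuous and its range includes the interval $]2\pi/\sqrt{\lambda g_0},+\infty[$.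
   Context: $\mathcal{G}(\pm\infty)$ denote the limits (possibly $+\infty$) of $\mathcal{G}(x)$ as $x\to\pm\infty$, which exist since $\mathcal{G}$ is monotone on each half-line. *)

theory Defs
  imports "HOL-Analysis.Analysis"
begin

definition Gprim :: "(real \<Rightarrow> real) \<Rightarrow> real \<Rightarrow> real" where
  "Gprim g x = (if 0 \<le> x then integral {0..x} g else - integral {x..0} g)"

definition Gtop :: "(real \<Rightarrow> real) \<Rightarrow> ereal" where
  "Gtop g = Lim at_top (\<lambda>x. ereal (Gprim g x))"

definition Gbot :: "(real \<Rightarrow> real) \<Rightarrow> ereal" where
  "Gbot g = Lim at_bot (\<lambda>x. ereal (Gprim g x))"

definition xplus :: "(real \<Rightarrow> real) \<Rightarrow> real \<Rightarrow> real" where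
  "xplus g c = (THE x. 0 < x \<and> Gprim g x = c)"

definition xminus :: "(real \<Rightarrow> real) \<Rightarrow> real \<Rightarrow> real" where
  "xminus g c = (THE x. x < 0 \<and> Gprim g x = c)"

definition tau_plus :: "(real \<Rightarrow> real) \<Rightarrow> real \<Rightarrow> real \<Rightarrow> real" where
  "tau_plus g lam c = sqrt (2 / lam) * integral {0..xplus g c} (\<lambda>\<xi>. 1 / sqrt (c - Gprim g \<xi>))"

definition tau_minus :: "(real \<Rightarrow> real) \<Rightarrow> real \<Rightarrow> real \<Rightarrow> real" where
  "tau_minus g lam c = sqrt (2 / lam) * integral {xminus g c..0} (\<lambda>\<xi>. 1 / sqrt (c - Gprim g \<xi>))"

definition time_map :: "(real \<Rightarrow> real) \<Rightarrow> real \<Rightarrow> real \<Rightarrow> real" where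
  "time_map g lam c = tau_plus g lam c + tau_minus g lam c"

definition loc_lipschitz :: "(real \<Rightarrow> real) \<Rightarrow> bool" where
  "loc_lipschitz g \<longleftrightarrow> (\<forall>x. \<exists>e>0. \<exists>L. L-lipschitz_on (cball x e) g)"

end

theory Submission
  imports Defs
begin

lemma alg1: fixes Z W a :: real assumes "Z \<noteq> 0" "W \<noteq> 0" shows "a / Z = a * (2 * W) / (2 * Z * W)"
  using assms by (simp add: field_simps)

lemma alg2: fixes Z W a \<xi> gg :: real assumes Z: "Z \<noteq> 0" and W: "W \<noteq> 0" and e: "1 + (a * \<xi> / Z)^2 = W / Z^2"
  shows "inverse (1 + (a * \<xi> / Z)^2) * ((a * 1 * Z - a * \<xi> * (inverse Z / 2 * (0 - gg))) / (Z * Z)) = a * (2 * Z^2 + \<xi> * gg) / (2 * Z * W)"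
  unfolding e using Z W by (simp add: field_simps power2_eq_square)

lemma alg3: fixes Z a \<xi> :: real assumes "Z \<noteq> 0" shows "1 + (a * \<xi> / Z)^2 = (Z^2 + a^2 * \<xi>^2) / Z^2"
  using assms by (simp add: field_simps power2_eq_square)

lemma alg4: fixes s t p :: real assumes "s \<noteq> 0" "t \<noteq> 0" shows "s * (p / (s * t)) = p / t"
  using assms by (simp add: field_simps)

lemma alg5: fixes s c M :: real assumes "s > 0" "s * s = c" shows "s / M = (c / M) / s"
  using assms by (cases "M = 0") (auto simp: field_simps)

locale posg =
  fixes g :: "real \<Rightarrow> real"
  assumes cont: "continuous_on UNIV g"
    and g00: "g 0 = 0"
    and pos: "\<And>x. 0 < x \<Longrightarrow> 0 < g x"
    and near0: "\<exists>\<delta>>0. \<exists>k>0. \<forall>x. 0 < x \<and> x < \<delta> \<longrightarrow> k * x \<le> g x"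
begin

abbreviation "G \<equiv> Gprim g"

lemma intg: "g integrable_on {a..b}"
  by (rule integrable_continuous_real) (rule continuous_on_subset[OF cont], auto)

lemma G_eq: "0 \<le> x \<Longrightarrow> G x = integral {0..x} g"
  by (simp add: Gprim_def)

lemma G0: "G 0 = 0" by (simp add: Gprim_def)

lemma G_diff: assumes "0 \<le> x" "x \<le> y" shows "G y - G x = integral {x..y} g"
  using Henstock_Kurzweil_Integration.integral_combine[OF assms intg[of 0 y]] assms by (simp add: G_eq)

lemma kbound: assumes "0 < B" shows "\<exists>k>0. \<forall>x. 0 \<le> x \<and> x \<le> B \<longrightarrow> k * x \<le> g x"
proof -
  obtain \<delta> k where d: "\<delta> > 0" "k > 0" and dk: "\<And>x. 0 < x \<Longrightarrow> x < \<delta> \<Longrightarrow> k * x \<le> g x"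
    using near0 by blast
  show ?thesis
  proof (cases "B < \<delta>")
    case True
    then show ?thesis using d dk g00 by (metis less_eq_real_def mult_zero_right order_le_less_trans)
  next
    case False
    have "compact {\<delta>/2..B}" by simp
    moreover have "{\<delta>/2..B} \<noteq> {}" using False d by auto
    moreover have "continuous_on {\<delta>/2..B} g" using cont continuous_on_subset by blast
    ultimately obtain x0 where x0: "x0 \<in> {\<delta>/2..B}" "\<And>y. y \<in> {\<delta>/2..B} \<Longrightarrow> g x0 \<le> g y"
      using continuous_attains_inf by metis
    have m: "g x0 > 0" using x0 d pos by auto
    define k' where "k' = min k (g x0 / B)"
    have "k' > 0" using m assms d by (simp add: k'_def)
    moreover have "k' * x \<le> g x" if "0 \<le> x" "x \<le> B" for x
    proof (cases "x < \<delta>/2")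
      case True
      show ?thesis
      proof (cases "x = 0")
        case True then show ?thesis by (simp add: g00)
      next
        case False
        then have "k * x \<le> g x" using dk True that d by auto
        moreover have "k' * x \<le> k * x" using that by (simp add: k'_def mult_right_mono)
        ultimately show ?thesis by linarith
      qed
    next
      case False
      have "k' \<le> g x0 / B" by (simp add: k'_def)
      then have "k' * x \<le> (g x0 / B) * x" by (rule mult_right_mono) (use that in auto)
      also have "\<dots> \<le> g x0" using that m assms by (simp add: field_simps mult_left_mono)
      also have "\<dots> \<le> g x" using x0 False that by auto
      finally show ?thesis .
    qed
    ultimately show ?thesis by blast
  qed
qed

lemma G_lower:
  assumes k: "\<And>t. 0 \<le> t \<Longrightarrow> t \<le> B \<Longrightarrow> k * t \<le> g t" and xy: "0 \<le> x" "x \<le> y" "y \<le> B"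
  shows "G y - G x \<ge> k * (y^2 - x^2) / 2"
proof -
  have "((\<lambda>t. k * t) has_integral (k * y^2 / 2 - k * x^2 / 2)) {x..y}"
    apply (rule fundamental_theorem_of_calculus[OF xy(2)])
    apply (auto intro!: derivative_eq_intros simp: has_real_derivative_iff_has_vector_derivative[symmetric])
    done
  then have "k * y^2 / 2 - k * x^2 / 2 \<le> integral {x..y} g"
    apply (rule has_integral_le[OF _ integrable_integral[OF intg]])
    using k xy by auto
  then show ?thesis using G_diff[OF xy(1,2)] by (simp add: algebra_simps)
qed

lemma G_strict: assumes "0 \<le> x" "x < y" shows "G x < G y"
proof -
  obtain k where k: "k > 0" "\<And>t. 0 \<le> t \<and> t \<le> y \<Longrightarrow> k * t \<le> g t"
    using kbound[of y] assms by auto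
  have "G y - G x \<ge> k * (y^2 - x^2) / 2" using G_lower[of y k x y] k assms by auto
  moreover have "y^2 - x^2 > 0" using assms by (simp add: power_strict_mono)
  ultimately show ?thesis using k by (smt (verit) divide_pos_pos mult_pos_pos)
qed

lemma G_mono: "0 \<le> x \<Longrightarrow> x \<le> y \<Longrightarrow> G x \<le> G y"
  using G_strict by (metis order_le_less order_refl)

lemma G_pos: "0 < x \<Longrightarrow> 0 < G x" using G_strict[of 0 x] G0 by simp

lemma G_cont: "continuous_on {0..B} G"
proof -
  have "continuous_on {0..B} (\<lambda>x. integral {0..x} g)"
    by (rule indefinite_integral_continuous_1[OF intg])
  then show ?thesis by (rule continuous_on_eq) (auto simp: G_eq)
qed

lemma G_deriv: assumes "0 < x" shows "(G has_real_derivative g x) (at x)"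
proof -
  have "((\<lambda>y. integral {0..y} g) has_real_derivative g x) (at x within {0..x+1})"
    by (rule integral_has_real_derivative) (use cont continuous_on_subset assms in auto)
  then have "((\<lambda>y. integral {0..y} g) has_real_derivative g x) (at x)"
    using assms by (subst (asm) at_within_interior) auto
  then show ?thesis
    by (rule has_field_derivative_transform_within_open[where S="{0<..}"]) (use assms in \<open>auto simp: G_eq\<close>)
qed


lemma Gtop_eq: "Gtop g = (SUP x\<in>{0..}. ereal (G x))"
proof -
  let ?S = "SUP x\<in>{0..}. ereal (G x)"
  have "((\<lambda>x. ereal (G x)) \<longlongrightarrow> ?S) at_top"
  proof (rule order_tendstoI)
    fix y assume "y < ?S"
    then obtain X where X: "X \<in> {0..}" "y < ereal (G X)" by (auto simp: less_SUP_iff)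
    have "y < ereal (G x)" if "X \<le> x" for x
    proof -
      have "ereal (G X) \<le> ereal (G x)" using G_mono[of X x] X that by auto
      with X(2) show ?thesis by (rule order_less_le_trans)
    qed
    then show "eventually (\<lambda>x. y < ereal (G x)) at_top"
      unfolding eventually_at_top_linorder by blast
  next
    fix y assume y: "?S < y"
    have "ereal (G x) < y" if "0 \<le> x" for x
    proof -
      have "ereal (G x) \<le> ?S" by (rule SUP_upper) (use that in auto)
      then show ?thesis using y by (rule order_le_less_trans)
    qed
    then show "eventually (\<lambda>x. ereal (G x) < y) at_top"
      unfolding eventually_at_top_linorder by blast
  qed
  then show ?thesis unfolding Gtop_def by (intro tendsto_Lim) auto
qed

lemma G_less_Gtop: assumes "0 \<le> x" shows "ereal (G x) < Gtop g"
proof -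
  have "G x < G (x+1)" using G_strict assms by auto
  moreover have "ereal (G (x+1)) \<le> Gtop g" unfolding Gtop_eq by (rule SUP_upper) (use assms in auto)
  ultimately have "ereal (G x) < ereal (G (x+1))" "ereal (G (x+1)) \<le> Gtop g" by simp_all
  then show ?thesis by (rule order_less_le_trans)
qed

lemma less_Gtop: assumes "ereal c < Gtop g" shows "\<exists>X\<ge>0. c < G X"
  using assms unfolding Gtop_eq less_SUP_iff by auto

definition "Dp = {c. 0 < c \<and> ereal c < Gtop g}"

lemma xp_ex: assumes "c \<in> Dp" shows "\<exists>!x. 0 < x \<and> G x = c"
proof -
  have c: "0 < c" "ereal c < Gtop g" using assms by (auto simp: Dp_def)
  obtain X where X: "X \<ge> 0" "c < G X" using less_Gtop[OF c(2)] by auto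
  obtain x where x: "0 \<le> x" "x \<le> X" "G x = c"
    using IVT'[of G 0 c X] G_cont[of X] X c G0 by auto
  have "x \<noteq> 0" using x c G0 by auto
  with x have ex: "0 < x \<and> G x = c" by auto
  have un: "y = x" if y: "0 < y \<and> G y = c" for y
  proof (rule ccontr)
    assume "y \<noteq> x"
    then consider "y < x" | "x < y" by linarith
    then show False using G_strict[of y x] G_strict[of x y] x y by cases auto
  qed
  show ?thesis using ex un by blast
qed

abbreviation "xp \<equiv> xplus g"

lemma xp_prop: assumes "c \<in> Dp" shows "0 < xp c" "G (xp c) = c"
proof -
  have "0 < (THE x. 0 < x \<and> G x = c) \<and> G (THE x. 0 < x \<and> G x = c) = c"
    by (rule theI'[OF xp_ex[OF assms]])
  then show "0 < xp c" "G (xp c) = c" unfolding xplus_def by auto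
qed

lemma xp_unique: assumes "c \<in> Dp" "0 < x" "G x = c" shows "xp c = x"
  using the1_equality[OF xp_ex[OF assms(1)], of x] assms by (simp add: xplus_def)

lemma G_in_Dp: "0 < x \<Longrightarrow> G x \<in> Dp"
  using G_pos G_less_Gtop by (auto simp: Dp_def)

lemma xp_G: "0 < x \<Longrightarrow> xp (G x) = x"
  using xp_unique G_in_Dp by auto

lemma xp_le: assumes "c \<in> Dp" "0 < d" "c \<le> G d" shows "xp c \<le> d"
proof (rule ccontr)
  assume "\<not> xp c \<le> d"
  then have "G d < G (xp c)" using G_strict[of d "xp c"] assms by auto
  then show False using xp_prop[OF assms(1)] assms by auto
qed

lemma xp_mono: assumes "c \<in> Dp" "c' \<in> Dp" "c \<le> c'" shows "xp c \<le> xp c'"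
  using xp_le[OF assms(1) xp_prop(1)[OF assms(2)]] xp_prop(2)[OF assms(2)] assms by auto

lemma Dp_interval: assumes "c \<in> Dp" "c' \<in> Dp" "c \<le> t" "t \<le> c'" shows "t \<in> Dp"
proof -
  have "ereal t \<le> ereal c'" using assms by simp
  moreover have "ereal c' < Gtop g" using assms by (simp add: Dp_def)
  ultimately have "ereal t < Gtop g" by (rule order_le_less_trans)
  then show ?thesis using assms by (simp add: Dp_def)
qed

lemma G_sep:
  assumes k: "\<And>t. 0 \<le> t \<Longrightarrow> t \<le> B \<Longrightarrow> k * t \<le> g t" "k > 0"
    and xs: "0 \<le> x" "x \<le> B" "0 \<le> x0" "x0 \<le> B"
  shows "k * x0 * \<bar>x - x0\<bar> / 2 \<le> \<bar>G x - G x0\<bar>"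
proof (cases "x0 \<le> x")
  case True
  have "G x - G x0 \<ge> k * (x^2 - x0^2) / 2" using G_lower[of B k x0 x] k xs True by auto
  moreover have "x0 * (x - x0) \<le> x^2 - x0^2"
  proof -
    have "x0 * (x - x0) \<le> (x + x0) * (x - x0)" by (rule mult_right_mono) (use True xs in auto)
    also have "\<dots> = x^2 - x0^2" by (simp add: power2_eq_square algebra_simps)
    finally show ?thesis .
  qed
  moreover have "k * (x0 * (x - x0)) / 2 \<le> k * (x^2 - x0^2) / 2"
    using k \<open>x0 * (x - x0) \<le> x^2 - x0^2\<close> by (intro divide_right_mono mult_left_mono) auto
  ultimately have "k * (x0 * (x - x0)) / 2 \<le> G x - G x0" by linarith
  moreover have "k * x0 * \<bar>x - x0\<bar> / 2 = k * (x0 * (x - x0)) / 2" using True by simp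
  moreover have "G x - G x0 \<le> \<bar>G x - G x0\<bar>" by (rule abs_ge_self)
  ultimately show ?thesis by linarith
next
  case False
  have "G x0 - G x \<ge> k * (x0^2 - x^2) / 2" using G_lower[of B k x x0] k xs False by auto
  moreover have "x0 * (x0 - x) \<le> x0^2 - x^2"
  proof -
    have "x0 * (x0 - x) \<le> (x0 + x) * (x0 - x)" by (rule mult_right_mono) (use False xs in auto)
    also have "\<dots> = x0^2 - x^2" by (simp add: power2_eq_square algebra_simps)
    finally show ?thesis .
  qed
  moreover have "k * (x0 * (x0 - x)) / 2 \<le> k * (x0^2 - x^2) / 2"
    using k \<open>x0 * (x0 - x) \<le> x0^2 - x^2\<close> by (intro divide_right_mono mult_left_mono) auto
  ultimately have "k * (x0 * (x0 - x)) / 2 \<le> G x0 - G x" by linarith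
  moreover have "k * x0 * \<bar>x - x0\<bar> / 2 = k * (x0 * (x0 - x)) / 2" using False by simp
  moreover have "G x0 - G x \<le> \<bar>G x - G x0\<bar>" by (simp add: abs_if)
  ultimately show ?thesis by linarith
qed

lemma xp_cont: "continuous_on Dp xp"
  unfolding continuous_on_iff
proof (intro ballI allI impI)
  fix c0 e :: real assume c0: "c0 \<in> Dp" and e: "0 < e"
  define x0 where "x0 = xp c0"
  have x0: "0 < x0" "G x0 = c0" using xp_prop[OF c0] by (auto simp: x0_def)
  define B where "B = x0 + 1"
  have c2: "G B \<in> Dp" "c0 < G B" using G_in_Dp G_strict[of x0 B] x0 by (auto simp: B_def)
  obtain k where k: "k > 0" "\<And>t. 0 \<le> t \<and> t \<le> B \<Longrightarrow> k * t \<le> g t" using kbound[of B] x0 by (auto simp: B_def)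
  define d where "d = min (G B - c0) (e * k * x0 / 2)"
  have d: "d > 0" using c2 e k x0 by (auto simp: d_def)
  have "dist (xp c) (xp c0) < e" if c: "c \<in> Dp" "dist c c0 < d" for c
  proof -
    have "c \<le> G B" using c by (auto simp: d_def dist_real_def)
    then have xB: "xp c \<le> B" using xp_le[OF c(1)] x0 by (auto simp: B_def)
    have xpos: "0 < xp c" "G (xp c) = c" using xp_prop[OF c(1)] by auto
    have "k * x0 * \<bar>xp c - x0\<bar> / 2 \<le> \<bar>G (xp c) - G x0\<bar>"
      by (rule G_sep[of B k]) (use k xB xpos x0 in \<open>auto simp: B_def\<close>)
    also have "\<dots> = dist c c0" using xpos x0 by (simp add: dist_real_def)
    also have "\<dots> < e * k * x0 / 2" using c by (auto simp: d_def)
    finally have "(k * x0 / 2) * \<bar>xp c - x0\<bar> < (k * x0 / 2) * e" by (simp add: algebra_simps)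
    then have "\<bar>xp c - x0\<bar> < e" using k x0 by (simp add: mult_less_cancel_left_pos)
    then show ?thesis by (simp add: dist_real_def x0_def)
  qed
  with d show "\<exists>d>0. \<forall>x'\<in>Dp. dist x' c0 < d \<longrightarrow> dist (xp x') (xp c0) < e"
    by (intro exI[of _ d] conjI ballI impI) auto
qed

lemma ms_lt: "0 < x \<Longrightarrow> s < 1 \<Longrightarrow> x * s < (x::real)"
  using mult_strict_left_mono[of s 1 x] by simp

lemma ms_le: "0 \<le> x \<Longrightarrow> 0 \<le> s \<Longrightarrow> s \<le> 1 \<Longrightarrow> x * s \<le> (x::real)"
  by (simp add: mult_left_le)

definition "Psi c s = xp c * (1 / sqrt (c - G (xp c * s)))"

lemma image_div: assumes "0 < (x::real)" shows "(\<lambda>t. t / x) ` {0..x} = {0..1}"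
proof
  show "(\<lambda>t. t / x) ` {0..x} \<subseteq> {0..1}" using assms by (auto simp: divide_le_eq_1_pos)
  show "{0..1} \<subseteq> (\<lambda>t. t / x) ` {0..x}"
  proof
    fix s :: real assume s: "s \<in> {0..1}"
    have "x * s \<in> {0..x}" using s assms by (auto simp: mult_left_le)
    moreover have "s = (x * s) / x" using assms by simp
    ultimately show "s \<in> (\<lambda>t. t / x) ` {0..x}" by blast
  qed
qed

lemma tau_plus_Psi: assumes "c \<in> Dp"
  shows "tau_plus g lam c = sqrt (2 / lam) * integral {0..1} (Psi c)"
proof -
  define x where "x = xp c"
  define f where "f = (\<lambda>\<xi>. 1 / sqrt (c - G \<xi>))"
  have x: "0 < x" using xp_prop[OF assms] by (simp add: x_def)
  have "integral {0..1} (\<lambda>s. f (x * s)) = (1 / x) * integral {0..x} f"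
    using integral_stretch_real[where m=x and f=f and a=0 and b=x] x image_div[OF x] by simp
  moreover have "integral {0..1} (Psi c) = x * integral {0..1} (\<lambda>s. f (x * s))"
    unfolding Psi_def f_def x_def by (rule integral_mult_right)
  ultimately have "integral {0..1} (Psi c) = integral {0..x} f" using x by simp
  then show ?thesis unfolding tau_plus_def f_def x_def by simp
qed

lemma Psi_one: assumes "c \<in> Dp" shows "Psi c 1 = 0"
  using xp_prop[OF assms] by (simp add: Psi_def)

lemma Psi_bound:
  assumes c: "c \<in> Dp" and k: "k > 0" "\<And>t. 0 \<le> t \<Longrightarrow> t \<le> xp c \<Longrightarrow> k * t \<le> g t"
    and s: "s \<in> {0..1}"
  shows "0 \<le> Psi c s" "Psi c s \<le> sqrt (2 / k) * (1 / sqrt (1 - s))"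
proof -
  define x where "x = xp c"
  have x: "0 < x" "G x = c" using xp_prop[OF c] by (auto simp: x_def)
  have "0 \<le> Psi c s \<and> Psi c s \<le> sqrt (2 / k) * (1 / sqrt (1 - s))"
  proof (cases "s = 1")
    case True
    then show ?thesis using Psi_one[OF c] by simp
  next
    case False
    then have s1: "0 \<le> s" "s < 1" using s by auto
    define u where "u = x * s"
    have u: "0 \<le> u" "u \<le> x" using s1 x by (auto simp: u_def mult_left_le)
    have "G x - G u \<ge> k * (x^2 - u^2) / 2" using G_lower[of x k u x] k u by (auto simp: x_def)
    moreover have "x^2 - u^2 \<ge> x^2 * (1 - s)"
    proof -
      have "x^2 - u^2 = x^2 * (1 - s) * (1 + s)" by (simp add: u_def power2_eq_square algebra_simps)
      moreover have "x^2 * (1 - s) * 1 \<le> x^2 * (1 - s) * (1 + s)"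
        by (rule mult_left_mono) (use s1 in auto)
      ultimately show ?thesis by simp
    qed
    moreover have "k * (x^2 * (1 - s)) / 2 \<le> k * (x^2 - u^2) / 2"
      using k \<open>x^2 - u^2 \<ge> x^2 * (1 - s)\<close> by (intro divide_right_mono mult_left_mono) auto
    ultimately have Q: "k * (x^2 * (1 - s)) / 2 \<le> c - G u" using x by linarith
    have "0 < k * (x^2 * (1 - s)) / 2" using x k s1 by (intro divide_pos_pos mult_pos_pos) auto
    then have Qpos: "0 < c - G u" using Q by linarith
    have "x^2 * (1 - s) \<le> (2 / k) * (c - G u)" using Q k by (simp add: field_simps)
    then have "sqrt (x^2 * (1 - s)) \<le> sqrt ((2 / k) * (c - G u))" by (rule real_sqrt_le_mono)
    moreover have e1: "sqrt (x^2 * (1 - s)) = x * sqrt (1 - s)" using x by (simp add: real_sqrt_mult)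
    moreover have e2: "sqrt ((2 / k) * (c - G u)) = sqrt (2 / k) * sqrt (c - G u)" by (rule real_sqrt_mult)
    ultimately have ineq: "x * sqrt (1 - s) \<le> sqrt (2 / k) * sqrt (c - G u)" by simp
    have sQ: "sqrt (c - G u) > 0" using Qpos by simp
    have s': "sqrt (1 - s) > 0" using s1 by simp
    have le: "x / sqrt (c - G u) \<le> sqrt (2 / k) / sqrt (1 - s)"
    proof -
      have "x / sqrt (c - G u) = (x * sqrt (1 - s)) / (sqrt (c - G u) * sqrt (1 - s))" using s' by simp
      also have "\<dots> \<le> (sqrt (2 / k) * sqrt (c - G u)) / (sqrt (c - G u) * sqrt (1 - s))"
        by (rule divide_right_mono[OF ineq]) (use sQ s' in simp)
      also have "\<dots> = sqrt (2 / k) / sqrt (1 - s)" using sQ by simp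
      finally show ?thesis .
    qed
    have "Psi c s = x / sqrt (c - G u)" by (simp add: Psi_def x_def u_def)
    then show ?thesis using le x Qpos by simp
  qed
  then show "0 \<le> Psi c s" "Psi c s \<le> sqrt (2 / k) * (1 / sqrt (1 - s))" by auto
qed

lemma h0_int: "(\<lambda>s::real. 1 / sqrt (1 - s)) integrable_on {0..1}"
proof -
  have "((\<lambda>s::real. 1 / sqrt (1 - s)) has_integral ((-2 * sqrt (1 - 1)) - (-2 * sqrt (1 - 0)))) {0..1}"
  proof (rule fundamental_theorem_of_calculus_interior[where f="\<lambda>s. -2 * sqrt (1 - s)"])
    show "continuous_on {0..1::real} (\<lambda>s. -2 * sqrt (1 - s))" by (intro continuous_intros)
    fix s :: real assume s: "s \<in> {0<..<1}"
    have "((\<lambda>s. -2 * sqrt (1 - s)) has_real_derivative (-2 * (inverse (sqrt (1 - s)) / 2 * (0 - 1)))) (at s)"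
      by (intro DERIV_cmult DERIV_chain2[OF DERIV_real_sqrt] derivative_intros) (use s in auto)
    then show "((\<lambda>s. -2 * sqrt (1 - s)) has_vector_derivative 1 / sqrt (1 - s)) (at s)"
      by (simp add: has_real_derivative_iff_has_vector_derivative[symmetric] divide_simps)
  qed simp
  then show ?thesis by blast
qed

lemma Psi_cont: assumes c: "c \<in> Dp" shows "continuous_on {0..<1} (Psi c)"
proof -
  define x where "x = xp c"
  have x: "0 < x" "G x = c" using xp_prop[OF c] by (auto simp: x_def)
  have pos: "0 < c - G (x * s)" if s: "s \<in> {0..<1}" for s
  proof -
    have "x * s < x" using ms_lt[of x s] x s by auto
    moreover have "0 \<le> x * s" using x s by simp
    ultimately have "G (x * s) < G x" using G_strict by blast
    then show ?thesis using x by simp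
  qed
  have cG: "continuous_on {0..<1} (\<lambda>s. G (x * s))"
    by (rule continuous_on_compose2[OF G_cont[of x]]) (use x in \<open>auto intro!: continuous_intros simp: mult_left_le\<close>)
  have nz: "sqrt (c - G (x * s)) \<noteq> 0" if "s \<in> {0..<1}" for s using pos[OF that] by simp
  have "continuous_on {0..<1} (\<lambda>s. x * (1 / sqrt (c - G (x * s))))"
    by (intro continuous_intros cG) (use nz in blast)
  then show ?thesis unfolding Psi_def x_def .
qed

lemma Psi_int: assumes c: "c \<in> Dp" shows "Psi c integrable_on {0..1}"
proof -
  obtain k where k: "k > 0" "\<And>t. 0 \<le> t \<and> t \<le> xp c \<Longrightarrow> k * t \<le> g t"
    using kbound[of "xp c"] xp_prop[OF c] by auto
  have m1: "Psi c \<in> borel_measurable (lebesgue_on {0..<1})"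
    by (rule continuous_imp_measurable_on_sets_lebesgue[OF Psi_cont[OF c]]) simp
  then have "Psi c measurable_on {0..<1}" by (simp add: measurable_on_iff_borel_measurable)
  moreover have "negligible (({0..<1} - {0..1}) \<union> ({0..1} - {0..<1::real}))"
  proof -
    have eq: "({0..<1} - {0..1}) \<union> ({0..1} - {0..<1}) = {1::real}" by auto
    show ?thesis unfolding eq by simp
  qed
  ultimately have "Psi c measurable_on {0..1}" by (rule measurable_on_spike_set)
  then have m2: "Psi c \<in> borel_measurable (lebesgue_on {0..1})" by (simp add: measurable_on_iff_borel_measurable)
  show ?thesis
  proof (rule measurable_bounded_by_integrable_imp_integrable[OF m2])
    show "(\<lambda>s. sqrt (2 / k) * (1 / sqrt (1 - s))) integrable_on {0..1}"
      using integrable_on_cmult_left[OF h0_int, of "sqrt (2 / k)"] by simp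
    show "norm (Psi c s) \<le> sqrt (2 / k) * (1 / sqrt (1 - s))" if "s \<in> {0..1}" for s
      using Psi_bound[OF c k(1) _ that] k(2) by auto
  qed simp
qed

lemma int_cont: assumes c1: "c1 \<in> Dp" and c2: "c2 \<in> Dp"
  shows "continuous_on {c1..c2} (\<lambda>c. integral {0..1} (Psi c))"
proof -
  obtain k where k: "k > 0" "\<And>t. 0 \<le> t \<and> t \<le> xp c2 \<Longrightarrow> k * t \<le> g t"
    using kbound[of "xp c2"] xp_prop[OF c2] by auto
  have inD: "c \<in> Dp" if "c \<in> {c1..c2}" for c using Dp_interval[OF c1 c2] that by auto
  have xle: "xp c \<le> xp c2" if "c \<in> {c1..c2}" for c using xp_mono[OF inD[OF that] c2] that by auto
  show ?thesis
    unfolding continuous_on_sequentially comp_def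
  proof (intro allI ballI impI, elim conjE)
    fix \<sigma> :: "nat \<Rightarrow> real" and a
    assume a: "a \<in> {c1..c2}" and \<sigma>: "\<forall>n. \<sigma> n \<in> {c1..c2}" and lim: "\<sigma> \<longlonglongrightarrow> a"
    have sD: "\<forall>n. \<sigma> n \<in> Dp" using \<sigma> inD by blast
    have xlim: "(\<lambda>n. xp (\<sigma> n)) \<longlonglongrightarrow> xp a"
      using xp_cont[unfolded continuous_on_sequentially comp_def] sD lim inD[OF a] by blast
    have "(\<lambda>n. integral {0..1} (Psi (\<sigma> n))) \<longlonglongrightarrow> integral {0..1} (Psi a)"
    proof (rule dominated_convergence(2))
      show "Psi (\<sigma> n) integrable_on {0..1}" for n using Psi_int inD \<sigma> by blast
      show "(\<lambda>s. sqrt (2 / k) * (1 / sqrt (1 - s))) integrable_on {0..1}"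
        using integrable_on_cmult_left[OF h0_int, of "sqrt (2 / k)"] by simp
      show "norm (Psi (\<sigma> n) s) \<le> sqrt (2 / k) * (1 / sqrt (1 - s))" if "s \<in> {0..1}" for n s
      proof -
        have "\<sigma> n \<in> Dp" "xp (\<sigma> n) \<le> xp c2" using inD xle \<sigma> by auto
        then show ?thesis using Psi_bound[OF _ k(1) _ that, of "\<sigma> n"] k(2) by auto
      qed
      show "(\<lambda>n. Psi (\<sigma> n) s) \<longlonglongrightarrow> Psi a s" if s: "s \<in> {0..1}" for s
      proof (cases "s = 1")
        case True
        then show ?thesis using Psi_one inD \<sigma> a by simp
      next
        case False
        have aD: "a \<in> Dp" using inD a by auto
        have xa: "0 < xp a" "G (xp a) = a" using xp_prop[OF aD] by auto
        have "xp a * s < xp a" using False s xa ms_lt[of "xp a" s] by auto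
        then have pos: "0 < a - G (xp a * s)" using G_strict[of "xp a * s" "xp a"] xa s by auto
        have Glim: "(\<lambda>n. G (xp (\<sigma> n) * s)) \<longlonglongrightarrow> G (xp a * s)"
        proof (rule continuous_on_tendsto_compose[OF G_cont[of "xp c2"]])
          show "(\<lambda>n. xp (\<sigma> n) * s) \<longlonglongrightarrow> xp a * s" by (intro tendsto_intros xlim)
          have sa: "0 \<le> s" "s \<le> 1" using s by auto
          have "xp a * s \<le> xp a" by (rule ms_le) (use xa sa in auto)
          then show "xp a * s \<in> {0..xp c2}" using order_trans[OF \<open>xp a * s \<le> xp a\<close> xle[OF a]] xa sa by simp
          have "xp (\<sigma> n) * s \<in> {0..xp c2}" for n
          proof -
            have p: "0 < xp (\<sigma> n)" "xp (\<sigma> n) \<le> xp c2" using xp_prop(1)[of "\<sigma> n"] inD \<sigma> xle[of "\<sigma> n"] by auto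
            have "xp (\<sigma> n) * s \<le> xp (\<sigma> n)" by (rule ms_le) (use p sa in auto)
            then show "xp (\<sigma> n) * s \<in> {0..xp c2}" using order_trans[OF \<open>xp (\<sigma> n) * s \<le> xp (\<sigma> n)\<close> p(2)] p sa by simp
          qed
          then show "\<forall>\<^sub>F n in sequentially. xp (\<sigma> n) * s \<in> {0..xp c2}" by simp
        qed
        have "(\<lambda>n. xp (\<sigma> n) * (1 / sqrt (\<sigma> n - G (xp (\<sigma> n) * s)))) \<longlonglongrightarrow> xp a * (1 / sqrt (a - G (xp a * s)))"
          by (intro tendsto_intros xlim lim Glim) (use pos in auto)
        then show ?thesis unfolding Psi_def .
      qed
    qed
    then show "(\<lambda>n. integral {0..1} (Psi (\<sigma> n))) \<longlonglongrightarrow> integral {0..1} (Psi a)" .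
  qed
qed

lemma tau_cont: "continuous_on Dp (tau_plus g lam)"
proof (rule continuous_at_imp_continuous_on, rule ballI)
  fix c0 assume c0: "c0 \<in> Dp"
  define c1 where "c1 = c0 / 2"
  define c2 where "c2 = G (xp c0 + 1)"
  have x0: "0 < xp c0" "G (xp c0) = c0" using xp_prop[OF c0] by auto
  have c0': "0 < c0" "ereal c0 < Gtop g" using c0 by (auto simp: Dp_def)
  have "ereal (c0/2) \<le> ereal c0" using c0'(1) by simp
  then have "ereal (c0/2) < Gtop g" using c0'(2) by (rule order_le_less_trans)
  then have c1D: "c1 \<in> Dp" using c0'(1) by (simp add: c1_def Dp_def)
  have c2D: "c2 \<in> Dp" using G_in_Dp x0 by (simp add: c2_def)
  have c02: "c0 < c2" using G_strict[of "xp c0" "xp c0 + 1"] x0 by (simp add: c2_def)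
  have c01: "c1 < c0" using c0 by (simp add: c1_def Dp_def)
  have "continuous_on {c1..c2} (\<lambda>c. sqrt (2 / lam) * integral {0..1} (Psi c))"
    by (intro continuous_intros int_cont c1D c2D)
  then have "continuous_on {c1..c2} (tau_plus g lam)"
    by (rule continuous_on_eq) (use tau_plus_Psi Dp_interval[OF c1D c2D] in auto)
  then show "isCont (tau_plus g lam) c0"
    by (rule continuous_on_interior) (use c01 c02 in auto)
qed


lemma f_int: assumes c: "c \<in> Dp"
  shows "(\<lambda>\<xi>. 1 / sqrt (c - G \<xi>)) integrable_on {0..xp c}"
proof -
  define x where "x = xp c"
  define f where "f = (\<lambda>\<xi>. 1 / sqrt (c - G \<xi>))"
  have x: "0 < x" using xp_prop[OF c] by (simp add: x_def)
  have "(\<lambda>s. (1 / x) * Psi c s) integrable_on {0..1}"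
    using integrable_on_cmult_left[OF Psi_int[OF c], of "1 / x"] by simp
  moreover have "(\<lambda>s. (1 / x) * Psi c s) = (\<lambda>s. f (x * s))"
    using x by (auto simp: Psi_def f_def x_def)
  ultimately have "(\<lambda>s. f (x * s)) integrable_on ((\<lambda>t. t / x) ` {0..x})"
    using image_div[OF x] by simp
  then have "f integrable_on {0..x}" using integrable_stretch_real_iff[where m=x and f=f and a=0 and b=x] x by simp
  then show ?thesis by (simp add: f_def x_def)
qed

lemma tau_upper:
  assumes c: "c \<in> Dp" and k: "k > 0" "\<And>t. 0 \<le> t \<Longrightarrow> t \<le> xp c \<Longrightarrow> k * t \<le> g t" and lam: "lam > 0"
  shows "tau_plus g lam c \<le> pi / sqrt (lam * k)"
proof -
  define x where "x = xp c"
  define f where "f = (\<lambda>\<xi>. 1 / sqrt (c - G \<xi>))"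
  define a where "a = sqrt (k / 2)"
  have a: "a > 0" "a^2 = k / 2" using k by (auto simp: a_def)
  have x: "0 < x" "G x = c" using xp_prop[OF c] by (auto simp: x_def)
  have fint: "f integrable_on {0..x}" using f_int[OF c] by (simp add: f_def x_def)
  have bnd: "integral {0..b} f \<le> pi / (2 * a)" if b: "b \<in> {0..<x}" for b
  proof -
    define Z where "Z = (\<lambda>\<xi>. sqrt (c - G \<xi>))"
    define \<Theta> where "\<Theta> = (\<lambda>\<xi>. arctan (a * \<xi> / Z \<xi>))"
    define D where "D = (\<lambda>\<xi>. a * (2 * (Z \<xi>)^2 + \<xi> * g \<xi>) / (2 * Z \<xi> * ((Z \<xi>)^2 + a^2 * \<xi>^2)))"
    have Gb: "G \<xi> < c" if "\<xi> \<in> {0..b}" for \<xi>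
    proof -
      have h: "0 \<le> \<xi>" "\<xi> < x" using that b by auto
      have "G \<xi> < G x" by (rule G_strict[OF h])
      then show "G \<xi> < c" using x(2) by simp
    qed
    have Zpos: "Z \<xi> > 0" if "\<xi> \<in> {0..b}" for \<xi> using Gb[OF that] by (simp add: Z_def)
    have Gc: "continuous_on {0..b} (\<lambda>\<xi>. G \<xi>)" using G_cont[of b] by simp
    have contT: "continuous_on {0..b} \<Theta>"
    proof -
      have nz: "sqrt (c - G \<xi>) \<noteq> 0" if "\<xi> \<in> {0..b}" for \<xi> using Gb[OF that] by simp
      show ?thesis unfolding \<Theta>_def Z_def by (intro continuous_intros Gc) (use nz in blast)
    qed
    have der: "(\<Theta> has_vector_derivative D \<xi>) (at \<xi>)" if xi: "\<xi> \<in> {0<..<b}" for \<xi>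
    proof -
      have xi': "\<xi> \<in> {0..b}" using xi by auto
      have Z0: "Z \<xi> > 0" by (rule Zpos[OF xi'])
      have dG: "(G has_real_derivative g \<xi>) (at \<xi>)" using G_deriv xi by auto
      have d1: "((\<lambda>x. c - G x) has_real_derivative (0 - g \<xi>)) (at \<xi>)" by (rule DERIV_diff[OF DERIV_const dG])
      have cpos: "0 < c - G \<xi>" using Gb[OF xi'] by simp
      have dZ: "(Z has_real_derivative (inverse (sqrt (c - G \<xi>)) / 2 * (0 - g \<xi>))) (at \<xi>)"
        unfolding Z_def by (rule DERIV_chain2[OF DERIV_real_sqrt[OF cpos] d1])
      have dq: "((\<lambda>\<xi>. a * \<xi> / Z \<xi>) has_real_derivative
                 ((a * 1) * Z \<xi> - a * \<xi> * (inverse (sqrt (c - G \<xi>)) / 2 * (0 - g \<xi>))) / (Z \<xi> * Z \<xi>)) (at \<xi>)"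
        by (rule DERIV_divide[OF DERIV_cmult[OF DERIV_ident] dZ]) (use Z0 in auto)
      have dT: "(\<Theta> has_real_derivative inverse (1 + (a * \<xi> / Z \<xi>)^2) *
                 (((a * 1) * Z \<xi> - a * \<xi> * (inverse (sqrt (c - G \<xi>)) / 2 * (0 - g \<xi>))) / (Z \<xi> * Z \<xi>))) (at \<xi>)"
        unfolding \<Theta>_def by (rule DERIV_chain2[OF DERIV_arctan dq])
      have sZ: "sqrt (c - G \<xi>) = Z \<xi>" by (simp add: Z_def)
      have Wp: "0 < (Z \<xi>)^2 + a^2 * \<xi>^2" using Z0 by (intro add_pos_nonneg) auto
      have eqD: "inverse (1 + (a * \<xi> / Z \<xi>)^2) *
                 (((a * 1) * Z \<xi> - a * \<xi> * (inverse (Z \<xi>) / 2 * (0 - g \<xi>))) / (Z \<xi> * Z \<xi>)) = D \<xi>"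
        unfolding D_def by (rule alg2[OF _ _ alg3]) (use Z0 Wp in simp_all)
      have "(\<Theta> has_real_derivative D \<xi>) (at \<xi>)" by (rule DERIV_cong[OF dT[unfolded sZ] eqD])
      then show ?thesis by (simp add: has_real_derivative_iff_has_vector_derivative)
    qed
    have ftc: "(D has_integral (\<Theta> b - \<Theta> 0)) {0..b}"
      by (rule fundamental_theorem_of_calculus_interior[OF _ contT der]) (use b in auto)
    have le: "a * f \<xi> \<le> D \<xi>" if xi: "\<xi> \<in> {0..b}" for \<xi>
    proof -
      have Z0: "Z \<xi> > 0" by (rule Zpos[OF xi])
      have xiB: "\<xi> \<le> x" using xi b by auto
      have kx: "k * \<xi> \<le> g \<xi>" using k(2)[of \<xi>] xi xiB by (auto simp: x_def)
      have m: "\<xi> * (k * \<xi>) \<le> \<xi> * g \<xi>" by (rule mult_left_mono) (use kx xi in auto)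
      have e2: "2 * ((Z \<xi>)^2 + a^2 * \<xi>^2) = 2 * (Z \<xi>)^2 + \<xi> * (k * \<xi>)"
        unfolding a(2) by (simp add: power2_eq_square algebra_simps)
      have num: "2 * ((Z \<xi>)^2 + a^2 * \<xi>^2) \<le> 2 * (Z \<xi>)^2 + \<xi> * g \<xi>" using e2 m by linarith
      have Wp: "0 < (Z \<xi>)^2 + a^2 * \<xi>^2" using Z0 by (intro add_pos_nonneg) auto
      have den: "0 < 2 * Z \<xi> * ((Z \<xi>)^2 + a^2 * \<xi>^2)" using Z0 Wp by simp
      have fZ: "a * f \<xi> = a / Z \<xi>" by (simp add: f_def Z_def)
      also have "\<dots> = a * (2 * ((Z \<xi>)^2 + a^2 * \<xi>^2)) / (2 * Z \<xi> * ((Z \<xi>)^2 + a^2 * \<xi>^2))"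
        by (rule alg1) (use Z0 Wp in auto)
      also have "\<dots> \<le> D \<xi>" unfolding D_def
        by (rule divide_right_mono) (use num a den in \<open>auto intro: mult_left_mono\<close>)
      finally show ?thesis .
    qed
    have fb: "f integrable_on {0..b}" using integrable_subinterval_real[OF fint] b by auto
    have "a * integral {0..b} f \<le> \<Theta> b - \<Theta> 0"
      using has_integral_le[OF has_integral_mult_right[OF integrable_integral[OF fb], of a] ftc] le by auto
    also have "\<dots> < pi / 2" using arctan_ubound by (simp add: \<Theta>_def)
    finally have h: "a * integral {0..b} f < pi / 2" .
    have "integral {0..b} f * (2 * a) = 2 * (a * integral {0..b} f)" by (simp add: ac_simps)
    then have "integral {0..b} f * (2 * a) < pi" using h by linarith
    then have "integral {0..b} f < pi / (2 * a)" by (subst pos_less_divide_eq) (use a in auto)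
    then show ?thesis by simp
  qed
  have ic: "continuous_on {0..x} (\<lambda>b. integral {0..b} f)" by (rule indefinite_integral_continuous_1[OF fint])
  have I: "integral {0..x} f \<le> pi / (2 * a)"
    by (rule continuous_le_on_closure[where S="{0..<x}" and f="\<lambda>b. integral {0..b} f" and x=x and a="pi / (2 * a)"])
       (use ic x bnd in auto)
  have "tau_plus g lam c \<le> sqrt (2 / lam) * (pi / (2 * a))"
    using mult_left_mono[OF I, of "sqrt (2 / lam)"] lam by (simp add: tau_plus_def f_def x_def)
  also have "\<dots> = pi / sqrt (lam * k)"
  proof -
    have s1: "sqrt (2 / lam) * sqrt (lam * k) = sqrt (2 * k)"
    proof -
      have "2 / lam * (lam * k) = 2 * k" using lam by simp
      then show ?thesis by (simp only: real_sqrt_mult[symmetric])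
    qed
    have "(2 * a)^2 = 2 * k" using a(2) by (simp add: power_mult_distrib)
    then have s2: "sqrt (2 * k) = 2 * a" by (rule real_sqrt_unique) (use a in auto)
    have q: "2 * a = sqrt (2 / lam) * sqrt (lam * k)" using s1 s2 by simp
    have n1: "sqrt (2 / lam) \<noteq> 0" using lam by simp
    have n2: "sqrt (lam * k) \<noteq> 0" using lam k by simp
    show ?thesis unfolding q by (rule alg4[OF n1 n2])
  qed
  finally show ?thesis .
qed

lemma tau_lower: assumes c: "c \<in> Dp" and lam: "lam > 0"
  shows "sqrt (2 / lam) * (xp c / sqrt c) \<le> tau_plus g lam c"
proof -
  define x where "x = xp c"
  have x: "0 < x" "G x = c" using xp_prop[OF c] by (auto simp: x_def)
  have cpos: "0 < c" using c by (simp add: Dp_def)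
  define \<phi> where "\<phi> = (\<lambda>s::real. if s = 1 then 0 else x / sqrt c)"
  have const: "((\<lambda>s. x / sqrt c) has_integral x / sqrt c) {0..1::real}"
    using has_integral_const_real[of "x / sqrt c" 0 1] by simp
  have phi: "(\<phi> has_integral x / sqrt c) {0..1}"
    by (rule has_integral_spike[OF negligible_sing _ const]) (auto simp: \<phi>_def)
  have le: "\<phi> s \<le> Psi c s" if s: "s \<in> {0..1}" for s
  proof (cases "s = 1")
    case True then show ?thesis using Psi_one[OF c] by (simp add: \<phi>_def)
  next
    case False
    have "x * s < x" using s False x ms_lt[of x s] by auto
    then have lt: "G (x * s) < c" using G_strict[of "x * s" x] x s by auto
    have ge: "0 \<le> G (x * s)" using G_mono[of 0 "x * s"] G0 x s by auto
    have "sqrt (c - G (x * s)) \<le> sqrt c" using ge by simp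
    then have "1 / sqrt c \<le> 1 / sqrt (c - G (x * s))" using lt by (simp add: frac_le)
    then have "x * (1 / sqrt c) \<le> x * (1 / sqrt (c - G (x * s)))" by (rule mult_left_mono) (use x in simp)
    then show ?thesis using False by (simp add: \<phi>_def Psi_def x_def)
  qed
  have "x / sqrt c \<le> integral {0..1} (Psi c)"
    using has_integral_le[OF phi integrable_integral[OF Psi_int[OF c]]] le by auto
  then have "sqrt (2 / lam) * (x / sqrt c) \<le> sqrt (2 / lam) * integral {0..1} (Psi c)"
    by (rule mult_left_mono) (use lam in simp)
  then show ?thesis using tau_plus_Psi[OF c] by (simp add: x_def)
qed

lemma tau_nonneg: assumes "c \<in> Dp" "lam > 0" shows "0 \<le> tau_plus g lam c"
proof -
  have "0 \<le> sqrt (2 / lam) * (xp c / sqrt c)" using xp_prop[OF assms(1)] assms by (simp add: Dp_def)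
  then show ?thesis using tau_lower[OF assms] by linarith
qed

lemma G_le_M: assumes M: "\<And>y. 0 \<le> y \<Longrightarrow> g y \<le> M" and x: "0 \<le> x" shows "G x \<le> M * x"
proof -
  have "integral {0..x} g \<le> x * M"
    using has_integral_le[OF integrable_integral[OF intg] has_integral_const_real[of M 0 x]] M x by auto
  then show ?thesis using G_eq[OF x] by (simp add: mult.commute)
qed

lemma large_fin: assumes fin: "Gtop g \<noteq> \<infinity>" and lam: "lam > 0"
  shows "\<exists>c\<in>Dp. T \<le> tau_plus g lam c"
proof -
  have pos1: "ereal 0 < Gtop g" 
  proof -
    have "ereal 0 < ereal (G 1)" using G_pos[of 1] by simp
    then show ?thesis using G_less_Gtop[of 1] by (rule order_less_trans) simp
  qed
  then obtain \<Gamma> where \<Gamma>: "Gtop g = ereal \<Gamma>" using fin by (cases "Gtop g") auto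
  have \<Gamma>pos: "\<Gamma> > 0" using pos1 \<Gamma> by simp
  define X where "X = max 1 (T * sqrt \<Gamma> / sqrt (2 / lam))"
  have X: "X > 0" by (simp add: X_def)
  define c where "c = G X"
  have cD: "c \<in> Dp" using G_in_Dp X by (simp add: c_def)
  have xc: "xp c = X" using xp_G X by (simp add: c_def)
  have cG: "c < \<Gamma>" using G_less_Gtop[of X] X \<Gamma> by (simp add: c_def)
  have cpos: "0 < c" using cD by (simp add: Dp_def)
  have s2: "sqrt (2 / lam) > 0" using lam by simp
  have "sqrt (2 / lam) * (X / sqrt \<Gamma>) \<le> sqrt (2 / lam) * (X / sqrt c)"
    using cG cpos X s2 by (intro mult_left_mono divide_left_mono) (auto simp: mult_pos_pos)
  moreover have "T \<le> sqrt (2 / lam) * (X / sqrt \<Gamma>)"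
  proof -
    have "T * sqrt \<Gamma> / sqrt (2 / lam) \<le> X" by (simp add: X_def)
    then have "T * sqrt \<Gamma> \<le> X * sqrt (2 / lam)" using s2 by (simp add: pos_divide_le_eq)
    then show ?thesis using \<Gamma>pos s2 by (simp add: field_simps)
  qed
  ultimately show ?thesis using tau_lower[OF cD lam] xc cD by force
qed

lemma large_inf: assumes inf: "Gtop g = \<infinity>" and M: "\<And>y. 0 \<le> y \<Longrightarrow> g y \<le> M" and lam: "lam > 0"
  shows "\<exists>c0>0. \<forall>c\<ge>c0. T \<le> tau_plus g lam c"
proof -
  define M' where "M' = max M 1"
  have M'1: "M' > 0" by (simp add: M'_def)
  have M'2: "g y \<le> M'" if "0 \<le> y" for y using M[OF that] by (simp add: M'_def)
  note M' = M'1 M'2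
  have s2: "sqrt (2 / lam) > 0" using lam by simp
  define R where "R = \<bar>T\<bar> * M' / sqrt (2 / lam)"
  have R: "R \<ge> 0" using M' s2 by (simp add: R_def)
  define c0 where "c0 = R^2 + 1"
  have "T \<le> tau_plus g lam c" if c: "c \<ge> c0" for c
  proof -
    have c0pos: "0 < c0" unfolding c0_def using zero_le_power2[of R] by linarith
    have cpos: "0 < c" using c c0pos by linarith
    have cD: "c \<in> Dp" using cpos inf by (simp add: Dp_def)
    have xc: "0 < xp c" "G (xp c) = c" using xp_prop[OF cD] by auto
    have "c \<le> M' * xp c" using G_le_M[OF M'(2), of "xp c"] xc by simp
    then have xge: "c / M' \<le> xp c" using M' by (simp add: pos_divide_le_eq mult.commute)
    have "R < sqrt c"
    proof -
      have "R^2 < c" using c by (simp add: c0_def)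
      then have "sqrt (R^2) < sqrt c" by (simp only: real_sqrt_less_iff)
      then show ?thesis using R by simp
    qed
    have sc: "sqrt c * sqrt c = c" using cpos by simp
    have "\<bar>T\<bar> \<le> sqrt (2 / lam) * (sqrt c / M')"
    proof -
      have "\<bar>T\<bar> * M' / sqrt (2 / lam) \<le> sqrt c" using \<open>R < sqrt c\<close> by (simp add: R_def)
      then have "\<bar>T\<bar> * M' \<le> sqrt c * sqrt (2 / lam)" by (subst (asm) pos_divide_le_eq[OF s2])
      then have "\<bar>T\<bar> \<le> (sqrt c * sqrt (2 / lam)) / M'" by (subst pos_le_divide_eq[OF M'1])
      then show ?thesis by (simp add: ac_simps)
    qed
    also have "sqrt c / M' = (c / M') / sqrt c" by (rule alg5) (use sc cpos in auto)
    also have "sqrt (2 / lam) * ((c / M') / sqrt c) \<le> sqrt (2 / lam) * (xp c / sqrt c)"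
      using xge cpos s2 by (intro mult_left_mono divide_right_mono) auto
    also have "\<dots> \<le> tau_plus g lam c" by (rule tau_lower[OF cD lam])
    finally show ?thesis by linarith
  qed
  moreover have "c0 > 0" unfolding c0_def using zero_le_power2[of R] by linarith
  ultimately show ?thesis by blast
qed

lemma small:
  assumes d: "\<delta> > 0" and k: "k > 0" "\<And>t. 0 < t \<Longrightarrow> t < \<delta> \<Longrightarrow> k * t \<le> g t" and lam: "lam > 0"
    and c: "c \<in> Dp" "c \<le> G (\<delta> / 2)"
  shows "tau_plus g lam c \<le> pi / sqrt (lam * k)"
proof (rule tau_upper[OF c(1) k(1) _ lam])
  have xle: "xp c \<le> \<delta> / 2" using xp_le[OF c(1) _ c(2)] d by simp
  fix t assume t: "0 \<le> t" "t \<le> xp c"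
  show "k * t \<le> g t"
  proof (cases "t = 0")
    case True then show ?thesis by (simp add: g00)
  next
    case False then show ?thesis using k(2)[of t] t xle d by auto
  qed
qed

end

lemma Gprim_reflect:
  fixes g :: "real \<Rightarrow> real"
  shows "Gprim (\<lambda>x. - g (- x)) x = Gprim g (- x)"
proof (cases "0 \<le> x")
  case True
  have r: "integral {0..x} (\<lambda>t. g (- t)) = integral {-x..0} g"
    using Henstock_Kurzweil_Integration.integral_reflect_real[of 0 "-x" g] by simp
  have "Gprim g (- x) = - integral {-x..0} g"
    using True by (cases "x = 0") (auto simp: Gprim_def)
  then show ?thesis using True r by (simp add: Gprim_def integral_neg)
next
  case False
  have r: "integral {x..0} (\<lambda>t. g (- t)) = integral {0..-x} g"
    using Henstock_Kurzweil_Integration.integral_reflect_real[of "-x" 0 g] by simp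
  then show ?thesis using False by (simp add: Gprim_def integral_neg)
qed

lemma Gbot_reflect:
  fixes g :: "real \<Rightarrow> real"
  shows "Gbot g = Gtop (\<lambda>x. - g (- x))"
  unfolding Gbot_def Gtop_def t2_space_class.Lim_def
  by (simp add: filterlim_at_bot_mirror Gprim_reflect)

lemma posg_reflect:
  assumes "posg g" and near: "\<exists>\<delta>>0. \<exists>k>0. \<forall>x. 0 < x \<and> x < \<delta> \<longrightarrow> k * x \<le> - g (- x)"
    and neg: "\<And>x. x < 0 \<Longrightarrow> g x < 0"
  shows "posg (\<lambda>x. - g (- x))"
proof
  have "continuous_on UNIV (\<lambda>x. g (- x))"
    by (rule continuous_on_compose2[OF posg.cont[OF assms(1)]]) (auto intro: continuous_intros)
  then show "continuous_on UNIV (\<lambda>x. - g (- x))" by (rule continuous_on_minus)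
  show "- g (- 0) = 0" using posg.g00[OF assms(1)] by simp
  show "\<And>x. 0 < x \<Longrightarrow> 0 < - g (- x)" using neg by auto
  show "\<exists>\<delta>>0. \<exists>k>0. \<forall>x. 0 < x \<and> x < \<delta> \<longrightarrow> k * x \<le> - g (- x)" by (rule near)
qed

lemma xminus_reflect:
  assumes P: "posg (\<lambda>x. - g (- x))" and c: "c \<in> posg.Dp (\<lambda>x. - g (- x))"
  shows "xminus g c = - xplus (\<lambda>x. - g (- x)) c"
proof -
  let ?gm = "\<lambda>x. - g (- x)"
  have y: "0 < xplus ?gm c" "Gprim ?gm (xplus ?gm c) = c" using posg.xp_prop[OF P c] by auto
  have u: "\<And>x. 0 < x \<Longrightarrow> Gprim ?gm x = c \<Longrightarrow> xplus ?gm c = x" using posg.xp_unique[OF P c] by auto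
  show ?thesis unfolding xminus_def
  proof (rule the1_equality)
    show "\<exists>!x. x < 0 \<and> Gprim g x = c"
    proof (rule ex1I[of _ "- xplus ?gm c"])
      show "- xplus ?gm c < 0 \<and> Gprim g (- xplus ?gm c) = c" using y by (simp add: Gprim_reflect)
      fix x assume "x < 0 \<and> Gprim g x = c"
      then have "0 < - x" "Gprim ?gm (- x) = c" by (auto simp: Gprim_reflect)
      then have "xplus ?gm c = - x" by (rule u)
      then show "x = - xplus ?gm c" by simp
    qed
    show "- xplus ?gm c < 0 \<and> Gprim g (- xplus ?gm c) = c" using y by (simp add: Gprim_reflect)
  qed
qed

lemma tau_minus_reflect:
  assumes P: "posg (\<lambda>x. - g (- x))" and c: "c \<in> posg.Dp (\<lambda>x. - g (- x))"
  shows "tau_minus g lam c = tau_plus (\<lambda>x. - g (- x)) lam c"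
proof -
  let ?gm = "\<lambda>x. - g (- x)"
  define y where "y = xplus ?gm c"
  have "integral {-y..0} (\<lambda>\<xi>. 1 / sqrt (c - Gprim g \<xi>)) = integral {0..y} (\<lambda>t. 1 / sqrt (c - Gprim g (- t)))"
    using Henstock_Kurzweil_Integration.integral_reflect_real[where a=0 and b=y and f="\<lambda>t. 1 / sqrt (c - Gprim g (- t))"] by simp
  then show ?thesis
    unfolding tau_minus_def tau_plus_def xminus_reflect[OF P c] y_def[symmetric]
    by (simp add: Gprim_reflect)
qed

lemma loclip_cont: assumes "loc_lipschitz g" shows "continuous_on UNIV g"
proof (rule continuous_at_imp_continuous_on, rule ballI)
  fix x
  obtain e L where e: "e > 0" "L-lipschitz_on (cball x e) g" using assms unfolding loc_lipschitz_def by blast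
  have "continuous_on (cball x e) g" using lipschitz_on_continuous_on[OF e(2)] .
  then show "isCont g x" by (rule continuous_on_interior) (use e in auto)
qed

theorem proposition3p1:
  fixes g :: "real \<Rightarrow> real" and g0 :: ereal and lam :: real
  assumes lip: "loc_lipschitz g"
    and g_0: "g 0 = 0"
    and sign: "\<And>x. x \<noteq> 0 \<Longrightarrow> g x * x > 0"
    and g0_def: "g0 = Liminf (at 0) (\<lambda>x. ereal (g x / x))"
    and g0_pos: "g0 > 0"
    and bdd: "\<exists>M. \<forall>x\<le>0. \<bar>g x\<bar> \<le> M"
    and lam: "lam > 0"
  shows "continuous_on {c. 0 < c \<and> ereal c < min (Gbot g) (Gtop g)} (time_map g lam)
    \<and> {T. (if g0 = \<infinity> then 0 else 2 * pi / sqrt (lam * real_of_ereal g0)) < T}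
        \<subseteq> time_map g lam ` {c. 0 < c \<and> ereal c < min (Gbot g) (Gtop g)}"
proof -
  define gm where "gm = (\<lambda>x. - g (- x))"
  have gpos: "0 < g x" if "0 < x" for x using sign[of x] that by (simp add: zero_less_mult_iff)
  have gneg: "g x < 0" if "x < 0" for x using sign[of x] that by (simp add: zero_less_mult_iff)
  have near: "\<exists>\<delta>>0. (\<forall>t. 0 < t \<and> t < \<delta> \<longrightarrow> k * t \<le> g t) \<and> (\<forall>t. 0 < t \<and> t < \<delta> \<longrightarrow> k * t \<le> - g (- t))"
    if k: "ereal k < g0" for k
  proof -
    have "eventually (\<lambda>x. ereal k < ereal (g x / x)) (at 0)"
      using less_LiminfD[of "ereal k" "at 0" "\<lambda>x. ereal (g x / x)"] k g0_def by simp
    then obtain \<delta> where d: "\<delta> > 0" "\<And>x. x \<noteq> 0 \<Longrightarrow> dist x 0 < \<delta> \<Longrightarrow> k < g x / x"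
      unfolding eventually_at by auto
    have "k * t \<le> g t" if "0 < t" "t < \<delta>" for t
      using d(2)[of t] that by (simp add: pos_less_divide_eq)
    moreover have "k * t \<le> - g (- t)" if "0 < t" "t < \<delta>" for t
    proof -
      have h: "k < - (g (- t) / t)" using d(2)[of "-t"] that by simp
      have "k * t < - (g (- t) / t) * t" by (rule mult_strict_right_mono[OF h]) (use that in simp)
      also have "\<dots> = - g (- t)" using that by simp
      finally show ?thesis by simp
    qed
    ultimately show ?thesis using d(1) by blast
  qed
  obtain k0 where k0: "0 < ereal k0" "ereal k0 < g0" using ereal_dense2[OF g0_pos] by blast
  then have k0pos: "k0 > 0" by simp
  obtain \<delta>0 where d0: "\<delta>0 > 0" "\<forall>t. 0 < t \<and> t < \<delta>0 \<longrightarrow> k0 * t \<le> g t" "\<forall>t. 0 < t \<and> t < \<delta>0 \<longrightarrow> k0 * t \<le> - g (- t)"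
    using near[OF k0(2)] by blast
  have cont: "continuous_on UNIV g" by (rule loclip_cont[OF lip])
  interpret P: posg g
    by (rule posg.intro) (use cont g_0 gpos d0 k0pos in auto)
  have Pgm: "posg gm" unfolding gm_def
    by (rule posg_reflect) (use P.posg_axioms gneg d0 k0pos in auto)
  interpret N: posg gm by (rule Pgm)
  define D where "D = {c. 0 < c \<and> ereal c < min (Gbot g) (Gtop g)}"
  have Gb: "Gbot g = Gtop gm" unfolding gm_def by (rule Gbot_reflect)
  have D: "D = P.Dp \<inter> N.Dp" by (auto simp: D_def P.Dp_def N.Dp_def Gb)
  have tm: "time_map g lam c = tau_plus g lam c + tau_plus gm lam c" if "c \<in> D" for c
    using tau_minus_reflect[of g c lam] Pgm that D unfolding gm_def time_map_def by auto
  have Dint: "t \<in> D" if "c \<in> D" "c' \<in> D" "c \<le> t" "t \<le> c'" for c c' t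
    using P.Dp_interval N.Dp_interval that D by blast
  have contD: "continuous_on D (time_map g lam)"
  proof -
    have "continuous_on D (\<lambda>c. tau_plus g lam c + tau_plus gm lam c)"
      by (intro continuous_on_add continuous_on_subset[OF P.tau_cont] continuous_on_subset[OF N.tau_cont]) (auto simp: D)
    then show ?thesis by (rule continuous_on_eq) (use tm in auto)
  qed
  have nonneg: "0 \<le> tau_plus g lam c" "0 \<le> tau_plus gm lam c" if "c \<in> D" for c
    using P.tau_nonneg N.tau_nonneg that D lam by auto
  have range: "T \<in> time_map g lam ` D"
    if T: "(if g0 = \<infinity> then 0 else 2 * pi / sqrt (lam * real_of_ereal g0)) < T" for T
  proof -
    have Tpos: "T > 0"
    proof (cases "g0 = \<infinity>")
      case True then show ?thesis using T by simp
    next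
      case False
      have "real_of_ereal g0 > 0" using g0_pos False by (cases g0) auto
      then have "0 < 2 * pi / sqrt (lam * real_of_ereal g0)" using lam by simp
      then show ?thesis using T False by simp
    qed
    define q where "q = (2 * pi / T)^2 / lam"
    have qpos: "q > 0" using Tpos lam by (simp add: q_def)
    have qg0: "ereal q < g0"
    proof (cases g0)
      case (real r)
      have r: "r > 0" using g0_pos real by simp
      have "2 * pi / sqrt (lam * r) < T" using T real by simp
      then have "2 * pi < T * sqrt (lam * r)" using r lam by (simp add: divide_less_eq mult.commute)
      then have "2 * pi / T < sqrt (lam * r)" using Tpos by (simp add: divide_less_eq mult.commute)
      then have "(2 * pi / T)^2 < (sqrt (lam * r))^2"
        using Tpos by (intro power_strict_mono) auto
      then have "(2 * pi / T)^2 < lam * r" using r lam by simp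
      then have "q < r" using lam by (simp add: q_def divide_less_eq mult.commute)
      then show ?thesis using real by simp
    next
      case PInf then show ?thesis by simp
    next
      case MInf then show ?thesis using g0_pos by simp
    qed
    obtain k where k: "ereal q < ereal k" "ereal k < g0" using ereal_dense2[OF qg0] by blast
    have kq: "q < k" using k by simp
    have kpos: "k > 0" using kq qpos by simp
    have kT: "2 * pi / sqrt (lam * k) < T"
    proof -
      have "(2 * pi / T)^2 < lam * k" using kq lam by (simp add: q_def divide_less_eq mult.commute)
      then have "2 * pi / T < sqrt (lam * k)" by (rule real_less_rsqrt)
      then have "2 * pi < sqrt (lam * k) * T" using Tpos by (simp add: divide_less_eq)
      then show ?thesis using lam kpos by (simp add: divide_less_eq mult.commute)
    qed
    obtain \<delta> where d: "\<delta> > 0" "\<forall>t. 0 < t \<and> t < \<delta> \<longrightarrow> k * t \<le> g t" "\<forall>t. 0 < t \<and> t < \<delta> \<longrightarrow> k * t \<le> gm t"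
      using near[OF k(2)] unfolding gm_def by blast
    define c1 where "c1 = min (Gprim g (\<delta>/2)) (Gprim gm (\<delta>/2))"
    have a1: "Gprim g (\<delta>/2) \<in> P.Dp" "Gprim gm (\<delta>/2) \<in> N.Dp" using P.G_in_Dp N.G_in_Dp d(1) by auto
    have a2: "0 < Gprim g (\<delta>/2)" "ereal (Gprim g (\<delta>/2)) < Gtop g"
      "0 < Gprim gm (\<delta>/2)" "ereal (Gprim gm (\<delta>/2)) < Gtop gm"
      using a1 by (simp_all add: P.Dp_def N.Dp_def)
    have c1pos: "0 < c1" using a2 by (simp add: c1_def)
    have "ereal c1 \<le> ereal (Gprim g (\<delta>/2))" by (simp add: c1_def)
    then have "ereal c1 < Gtop g" using a2(2) by (rule order_le_less_trans)
    then have c1P: "c1 \<in> P.Dp" using c1pos by (simp add: P.Dp_def)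
    have "ereal c1 \<le> ereal (Gprim gm (\<delta>/2))" by (simp add: c1_def)
    then have "ereal c1 < Gtop gm" using a2(4) by (rule order_le_less_trans)
    then have c1N: "c1 \<in> N.Dp" using c1pos by (simp add: N.Dp_def)
    have c1D: "c1 \<in> D" using c1P c1N D by auto
    have "tau_plus g lam c1 \<le> pi / sqrt (lam * k)"
      by (rule P.small[OF d(1) kpos _ lam c1P]) (use d in \<open>auto simp: c1_def\<close>)
    moreover have "tau_plus gm lam c1 \<le> pi / sqrt (lam * k)"
      by (rule N.small[OF d(1) kpos _ lam c1N]) (use d in \<open>auto simp: c1_def\<close>)
    ultimately have t1: "time_map g lam c1 \<le> T" using tm[OF c1D] kT by simp
    have "\<exists>c2\<in>D. T \<le> time_map g lam c2"
    proof -
      consider "Gtop g \<noteq> \<infinity>" "Gtop g \<le> Gtop gm" | "Gtop gm \<noteq> \<infinity>" "Gtop gm \<le> Gtop g" | "Gtop g = \<infinity>" "Gtop gm = \<infinity>"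
      proof -
        have "(Gtop g \<noteq> \<infinity> \<and> Gtop g \<le> Gtop gm) \<or> (Gtop gm \<noteq> \<infinity> \<and> Gtop gm \<le> Gtop g) \<or> (Gtop g = \<infinity> \<and> Gtop gm = \<infinity>)"
          by (cases "Gtop g \<le> Gtop gm") auto
        then show ?thesis using that by blast
      qed
      then show ?thesis
      proof cases
        case 1
        obtain c where c: "c \<in> P.Dp" "T \<le> tau_plus g lam c" using P.large_fin[OF 1(1) lam] by blast
        have "c \<in> N.Dp" using c(1) 1(2) by (auto simp: P.Dp_def N.Dp_def)
        then have cD: "c \<in> D" using c D by auto
        then show ?thesis using c nonneg[OF cD] tm[OF cD] by (intro bexI[OF _ cD]) simp
      next
        case 2
        obtain c where c: "c \<in> N.Dp" "T \<le> tau_plus gm lam c" using N.large_fin[OF 2(1) lam] by blast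
        have "c \<in> P.Dp" using c(1) 2(2) by (auto simp: P.Dp_def N.Dp_def)
        then have cD: "c \<in> D" using c D by auto
        then show ?thesis using c nonneg[OF cD] tm[OF cD] by (intro bexI[OF _ cD]) simp
      next
        case 3
        obtain M where M: "\<forall>x\<le>0. \<bar>g x\<bar> \<le> M" using bdd by blast
        have "gm y \<le> M" if "0 \<le> y" for y using M[rule_format, of "-y"] that by (simp add: gm_def)
        then obtain c where c: "c > 0" "\<forall>c'\<ge>c. T \<le> tau_plus gm lam c'" using N.large_inf[OF 3(2) _ lam] by blast
        have cD: "c \<in> D" using c 3 by (simp add: D P.Dp_def N.Dp_def)
        then show ?thesis using c nonneg[OF cD] tm[OF cD] by (intro bexI[OF _ cD]) auto
      qed
    qed
    then obtain c2 where c2: "c2 \<in> D" "T \<le> time_map g lam c2" by blast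
    show ?thesis
    proof (cases "c1 \<le> c2")
      case True
      have sub: "{c1..c2} \<subseteq> D"
      proof
        fix t assume "t \<in> {c1..c2}"
        then show "t \<in> D" using Dint[OF c1D c2(1)] by simp
      qed
      have cc: "continuous_on {c1..c2} (time_map g lam)" by (rule continuous_on_subset[OF contD sub])
      obtain x where x: "c1 \<le> x" "x \<le> c2" "time_map g lam x = T"
        using IVT'[OF t1 c2(2) True cc] by blast
      have "x \<in> D" using sub x(1,2) by auto
      then show ?thesis using x(3) by (metis image_eqI)
    next
      case False
      then have le: "c2 \<le> c1" by simp
      have sub: "{c2..c1} \<subseteq> D"
      proof
        fix t assume "t \<in> {c2..c1}"
        then show "t \<in> D" using Dint[OF c2(1) c1D] by simp
      qed
      have cc: "continuous_on {c2..c1} (time_map g lam)" by (rule continuous_on_subset[OF contD sub])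
      obtain x where x: "c2 \<le> x" "x \<le> c1" "time_map g lam x = T"
        using IVT2'[OF t1 c2(2) le cc] by blast
      have "x \<in> D" using sub x(1,2) by auto
      then show ?thesis using x(3) by (metis image_eqI)
    qed
  qed
  show ?thesis unfolding D_def[symmetric]
  proof (intro conjI subsetI)
    show "continuous_on D (time_map g lam)" by (rule contD)
    fix T assume "T \<in> {T. (if g0 = \<infinity> then 0 else 2 * pi / sqrt (lam * real_of_ereal g0)) < T}"
    then show "T \<in> time_map g lam ` D" using range by blast
  qed
qed

end
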